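(* Let $(\delta_\nu)_{\nu\geqslant 0}$ be a sequence of positive numbers with $\delta_\nu\to 0$. Suppose $(n_\nu)_{\nu\geqslant 0}$ is a strictly increasing sequence of positive integers and $(a_\nu)_{\nu\geqslant 0}$ a sequence of integers with $1\leqslant a_\nu<F_{n_\nu}$ and $\gcd(a_\nu,F_{n_\nu})=1$, such that, writing $$\alpha_\nu=\frac{a_\nu}{F_{n_\nu}},\quad \beta_\nu=\left\{\frac{F_{n_\nu-1}a_\nu}{F_{n_\nu}}\right\},\quad I_\nu=\left[\alpha_\nu,\alpha_\nu+\frac{\delta_\nu}{F_{n_\nu}^2}\right],\quad J_\nu=\left[\beta_\nu,\beta_\nu+\frac{\delta_\nu}{F_{n_\nu}^2}\right],$$ one has $I_{\nu+1}\subset I_\nu$ and $J_{\nu+1}\subset J_\nu$ for all $\nu$. Let $\alpha$ and $\beta$ be the real numbers with $\{\alpha\}=\bigcap_\nu I_\nu$ and $\{\beta\}=\bigcap_\nu J_\nu$ (as sets). Then $$\limsup_{Q\to\infty}\, Q\left(\min_{x\in\mathbb{Z},\,1\leqslant x<Q}\|\alpha x\|\cdot\|\beta x\|\right)\geqslant \frac{2}{3+\sqrt5}=0.381966\ldots$$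
   Context: $F_n$ denotes the $n$-th Fibonacci number ($F_1=F_2=1$, $F_{n+1}=F_n+F_{n-1}$). For a real $t$, $\{t\}$ is its fractional part and $\|t\|$ is the distance from $t$ to the nearest integer. (Such sequences exist: they are built inductively, choosing $n_{\nu+1}$ large enough and $a_{\nu+1}$ so that the nested-interval conditions hold.) *)

theory Defs
  imports Complex_Main "HOL-Number_Theory.Fib" "HOL-Library.Extended_Real"
begin

definition dist_int :: "real \<Rightarrow> real" where
  "dist_int t = min (frac t) (1 - frac t)"

definition alpha_seq :: "(nat \<Rightarrow> int) \<Rightarrow> (nat \<Rightarrow> nat) \<Rightarrow> nat \<Rightarrow> real" where
  "alpha_seq a n \<nu> = real_of_int (a \<nu>) / real (fib (n \<nu>))"

definition beta_seq :: "(nat \<Rightarrow> int) \<Rightarrow> (nat \<Rightarrow> nat) \<Rightarrow> nat \<Rightarrow> real" where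
  "beta_seq a n \<nu> = frac (real (fib (n \<nu> - 1)) * real_of_int (a \<nu>) / real (fib (n \<nu>)))"

definition I_int :: "(nat \<Rightarrow> real) \<Rightarrow> (nat \<Rightarrow> int) \<Rightarrow> (nat \<Rightarrow> nat) \<Rightarrow> nat \<Rightarrow> real set" where
  "I_int \<delta> a n \<nu> = {alpha_seq a n \<nu> .. alpha_seq a n \<nu> + \<delta> \<nu> / (real (fib (n \<nu>)))^2}"

definition J_int :: "(nat \<Rightarrow> real) \<Rightarrow> (nat \<Rightarrow> int) \<Rightarrow> (nat \<Rightarrow> nat) \<Rightarrow> nat \<Rightarrow> real set" where
  "J_int \<delta> a n \<nu> = {beta_seq a n \<nu> .. beta_seq a n \<nu> + \<delta> \<nu> / (real (fib (n \<nu>)))^2}"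

end

theory Submission
  imports Defs
begin


lemma fib_prod: "fib (a+b) \<le> fib (Suc a) * fib (Suc b)"
proof (cases b)
  case 0 then show ?thesis using fib_Suc_mono[of a] by simp
next
  case (Suc c)
  have "fib (a+b) = fib (Suc (a + c))" using Suc by simp
  also have "\<dots> = fib (Suc c) * fib (Suc a) + fib c * fib a" by (rule fib_add)
  also have "\<dots> \<le> fib (Suc c) * fib (Suc a) + fib c * fib (Suc a)"
    using fib_Suc_mono[of a] by simp
  also have "\<dots> = fib (Suc b) * fib (Suc a)" using Suc by (simp add: algebra_simps)
  finally show ?thesis by (simp add: mult.commute)
qed

lemma cassini': "int (fib (Suc j))^2 - int (fib j) * int (fib (Suc (Suc j))) = (-1)^j"
  using fib_Cassini_int[of j] by (simp add: algebra_simps)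

lemma fib_add_int: "int (fib (Suc (i + j))) = int (fib (Suc j)) * int (fib (Suc i)) + int (fib j) * int (fib i)"
  using fib_add[of i j] by (metis of_nat_add of_nat_mult)

lemma lattice_core:
  fixes i j :: nat and u w t :: int
  assumes u1: "int (fib (j+1)) \<le> u" and u2: "u < int (fib (j+2))"
    and rel: "int (fib (i+j+1)) * u - w = int (fib (i+j+2)) * t"
  shows "int (fib (i+j)) \<le> u * \<bar>w\<bar>"
proof -
  define A where "A = int (fib (j+1))"
  define B where "B = int (fib (j+2))"
  define C where "C = int (fib j)"
  define D where "D = int (fib (i+1))"
  define E where "E = int (fib i)"
  define P where "P = u * A - t * B"
  define Q where "Q = t * A - u * C"
  have BAC: "B = A + C" unfolding A_def B_def C_def by simp
  have cas: "A^2 - C * B = (-1)^j" unfolding A_def B_def C_def using cassini'[of j] by simp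
  have s: "(-1::int)^j = 1 \<or> (-1::int)^j = -1" by (metis neg_one_even_power neg_one_odd_power)
  have hu0: "A * P + B * Q = u * (A^2 - C * B)" unfolding P_def Q_def
    by (simp add: algebra_simps power2_eq_square)
  have hu: "(-1)^j * u = A * P + B * Q" using hu0 cas by simp
  have e1: "int (fib (i+j+1)) = D * A + E * C"
    unfolding A_def C_def D_def E_def using fib_add_int[of j i] by (simp add: algebra_simps)
  have e2: "int (fib (i+j+2)) = D * B + E * A"
    unfolding A_def B_def D_def E_def using fib_add_int[of "Suc j" i] by (simp add: algebra_simps)
  have hw: "w = D * P - E * Q" using rel unfolding P_def Q_def e1 e2 by (simp add: algebra_simps)
  have u0: "u \<ge> 0" using u1 by (smt (verit) of_nat_0_le_iff)
  have absu: "u = \<bar>A * P + B * Q\<bar>" using s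
  proof
    assume "(-1::int)^j = 1" then show ?thesis using hu u0 by simp
  next
    assume "(-1::int)^j = -1" then show ?thesis using hu u0 by simp
  qed
  have A0: "A \<ge> 1" unfolding A_def by (simp add: Suc_leI fib_neq_0_nat)
  have C0: "C \<ge> 0" "C \<le> A" unfolding A_def C_def by (auto simp: fib_Suc_mono)
  have D0: "D \<ge> 1" unfolding D_def by (simp add: Suc_leI fib_neq_0_nat)
  have E0: "E \<ge> 0" unfolding E_def by simp
  have uA: "u \<ge> A" "u < B" using u1 u2 A_def B_def by auto
  have prod1: "int (fib (i+j)) \<le> A * D" unfolding A_def D_def using fib_prod[of j i]
    by (simp add: algebra_simps) (metis of_nat_le_iff of_nat_mult add.commute)
  have B0: "B \<ge> 1" using A0 BAC C0 by linarith
  have prod2: "int (fib (i+j)) \<le> A * (D + E)"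
  proof -
    have "A * D \<le> A * (D + E)" using A0 E0 by (intro mult_left_mono) auto
    then show ?thesis using prod1 by linarith
  qed
  have opp: "\<bar>w\<bar> \<ge> D + E" if "P * Q < 0"
  proof -
    have "\<bar>P\<bar> \<ge> 1" "\<bar>Q\<bar> \<ge> 1" using that by (auto simp: mult_less_0_iff)
    then have "D * \<bar>P\<bar> \<ge> D * 1" "E * \<bar>Q\<bar> \<ge> E * 1" using D0 E0
      by (intro mult_left_mono; simp)+
    moreover have "\<bar>D * P - E * Q\<bar> = D * \<bar>P\<bar> + E * \<bar>Q\<bar>"
    proof (cases "P > 0")
      case True
      then have "Q < 0" using that by (auto simp: mult_less_0_iff)
      have "D * P \<ge> 0" "E * Q \<le> 0" using True \<open>Q < 0\<close> D0 E0
        by (simp_all add: mult_nonneg_nonpos)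
      then show ?thesis using True \<open>Q < 0\<close> by (simp add: abs_mult)
    next
      case False
      then have "P < 0" "Q > 0" using that by (auto simp: mult_less_0_iff)
      have "D * P \<le> 0" "E * Q \<ge> 0" using \<open>P < 0\<close> \<open>Q > 0\<close> D0 E0
        by (simp_all add: mult_nonneg_nonpos)
      then show ?thesis using \<open>P < 0\<close> \<open>Q > 0\<close> by (simp add: abs_mult)
    qed
    ultimately show ?thesis using hw by simp
  qed
  have same: False if "P * Q > 0"
  proof -
    have "\<bar>P\<bar> \<ge> 1" "\<bar>Q\<bar> \<ge> 1" using that by (auto simp: zero_less_mult_iff)
    then have "A * \<bar>P\<bar> \<ge> A * 1" "B * \<bar>Q\<bar> \<ge> B * 1" using A0 B0
      by (intro mult_left_mono; simp)+
    moreover have "\<bar>A * P + B * Q\<bar> = A * \<bar>P\<bar> + B * \<bar>Q\<bar>"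
    proof (cases "P > 0")
      case True
      then have "Q > 0" using that by (auto simp: zero_less_mult_iff)
      then show ?thesis using True A0 B0 by (simp add: abs_mult)
    next
      case False
      then have "P < 0" "Q < 0" using that by (auto simp: zero_less_mult_iff)
      have "A * P \<le> 0" "B * Q \<le> 0" using \<open>P < 0\<close> \<open>Q < 0\<close> A0 B0
        by (simp_all add: mult_nonneg_nonpos)
      then show ?thesis using \<open>P < 0\<close> \<open>Q < 0\<close> by (simp add: abs_mult)
    qed
    ultimately show False using absu uA A0 by linarith
  qed
  consider "P = 0" | "Q = 0" "P \<noteq> 0" | "P * Q > 0" | "P * Q < 0"
    by (metis linorder_neqE_linordered_idom mult_eq_0_iff)
  then show ?thesis
  proof cases
    case 1
    then have uu: "u = B * \<bar>Q\<bar>" using absu B0 by (simp add: abs_mult)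
    then have "Q \<noteq> 0" using uA A0 by auto
    then have "B * \<bar>Q\<bar> \<ge> B * 1" using B0 by (intro mult_left_mono) auto
    then show ?thesis using uu uA by simp
  next
    case 2
    then have uu: "u = A * \<bar>P\<bar>" using absu A0 by (simp add: abs_mult)
    have "\<bar>P\<bar> = 1"
    proof (rule ccontr)
      assume "\<bar>P\<bar> \<noteq> 1"
      then have "\<bar>P\<bar> \<ge> 2" using 2 by linarith
      then have "A * \<bar>P\<bar> \<ge> A * 2" using A0 by (intro mult_left_mono) auto
      then show False using uu uA BAC C0 by linarith
    qed
    then have "\<bar>w\<bar> = D" using hw 2 D0 by (auto simp: abs_mult)
    then show ?thesis using uu \<open>\<bar>P\<bar> = 1\<close> prod1 by simp
  next
    case 3 then show ?thesis using same by blast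
  next
    case 4
    then have "\<bar>w\<bar> \<ge> D + E" by (rule opp)
    then have "u * \<bar>w\<bar> \<ge> A * (D + E)" using uA A0 D0 E0
      by (intro mult_mono) auto
    then show ?thesis using prod2 by linarith
  qed
qed


lemma fib_bracket:
  fixes u :: nat
  assumes "1 \<le> u" "u < fib n"
  shows "\<exists>j. j + 2 \<le> n \<and> fib (j+1) \<le> u \<and> u < fib (j+2)"
  using assms
proof (induction n)
  case 0 then show ?case by simp
next
  case (Suc n)
  show ?case
  proof (cases "u < fib n")
    case True
    then obtain j where "j + 2 \<le> n \<and> fib (j+1) \<le> u \<and> u < fib (j+2)" using Suc by blast
    then show ?thesis by (intro exI[of _ j]) auto
  next
    case False
    have "n \<ge> 1" using Suc.prems False by (cases n) auto
    moreover have "n \<noteq> 1" using Suc.prems by auto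
    ultimately have "n \<ge> 2" by linarith
    then show ?thesis using False Suc.prems
      by (intro exI[of _ "n - 1"]) (auto simp: Suc_diff_le)
  qed
qed

lemma lattice:
  fixes n :: nat and U w t :: int
  assumes n2: "n \<ge> 2" and U0: "U \<noteq> 0" and Ub: "\<bar>U\<bar> < int (fib n)"
    and rel: "int (fib (n-1)) * U - w = int (fib n) * t"
  shows "int (fib (n-2)) \<le> \<bar>U\<bar> * \<bar>w\<bar>"
proof -
  have gen: "int (fib (n-2)) \<le> V * \<bar>ww\<bar>"
    if "V > 0" "V < int (fib n)" "int (fib (n-1)) * V - ww = int (fib n) * tt" for V ww tt
  proof -
    have "1 \<le> nat V" "nat V < fib n" using that by auto
    then obtain j where j: "j + 2 \<le> n" "fib (j+1) \<le> nat V" "nat V < fib (j+2)"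
      using fib_bracket[of "nat V" n] by blast
    define i where "i = n - j - 2"
    have ni: "n = i + j + 2" using i_def j by simp
    have "int (fib (i+j)) \<le> V * \<bar>ww\<bar>"
      by (rule lattice_core[where t = tt]) (use j that ni in auto)
    then show ?thesis using ni by simp
  qed
  show ?thesis
  proof (cases "U > 0")
    case True then show ?thesis using gen[of U w t] Ub rel by auto
  next
    case False
    then have "-U > 0" using U0 by simp
    moreover have "int (fib (n-1)) * (-U) - (-w) = int (fib n) * (-t)" using rel by (simp add: algebra_simps)
    ultimately show ?thesis using gen[of "-U" "-w" "-t"] Ub by auto
  qed
qed

lemma dist_int_le: "dist_int t \<le> \<bar>t - of_int k\<bar>"
proof -
  have "frac t = t - of_int \<lfloor>t\<rfloor>" by (simp add: frac_def)
  show ?thesis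
  proof (cases "k \<le> \<lfloor>t\<rfloor>")
    case True
    then have "of_int k \<le> (of_int \<lfloor>t\<rfloor> :: real)" by simp
    then show ?thesis unfolding dist_int_def frac_def using of_int_floor_le[of t] by linarith
  next
    case False
    then have "of_int k \<ge> (of_int \<lfloor>t\<rfloor> :: real) + 1" by linarith
    then show ?thesis unfolding dist_int_def frac_def using real_of_int_floor_add_one_gt[of t] by linarith
  qed
qed

lemma dist_int_ex: "\<exists>k. dist_int t = \<bar>t - of_int k\<bar>"
proof (cases "frac t \<le> 1 - frac t")
  case True
  then show ?thesis unfolding dist_int_def
    by (intro exI[of _ "\<lfloor>t\<rfloor>"]) (simp add: frac_def)
next
  case False
  then show ?thesis unfolding dist_int_def using frac_lt_1[of t]
    by (intro exI[of _ "\<lfloor>t\<rfloor> + 1"]) (auto simp: frac_def)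
qed

lemma dist_int_bounds: "0 \<le> dist_int t" "dist_int t \<le> 1/2"
  unfolding dist_int_def using frac_ge_0[of t] frac_lt_1[of t] by (auto simp: min_def)

lemma dist_int_lip: "dist_int s \<ge> dist_int t - \<bar>s - t\<bar>"
proof -
  obtain k where k: "dist_int s = \<bar>s - of_int k\<bar>" using dist_int_ex by blast
  have "dist_int t \<le> \<bar>t - of_int k\<bar>" by (rule dist_int_le)
  then show ?thesis using k by linarith
qed

lemma dist_int_shift: "dist_int (t + of_int k) = dist_int t"
  unfolding dist_int_def frac_def by simp




lemma key:
  fixes n :: nat and A x :: int and \<alpha> \<beta> e e' d :: real
  assumes n3: "n \<ge> 3" and cop: "gcd A (int (fib n)) = 1"
    and x1: "1 \<le> x" and x2: "x < int (fib n)"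
    and ha: "\<alpha> = real_of_int A / real (fib n) + e" and e0: "0 \<le> e" and e1: "e \<le> d / (real (fib n))^2"
    and hb: "\<beta> = frac (real (fib (n - 1)) * real_of_int A / real (fib n)) + e'"
    and e0': "0 \<le> e'" and e1': "e' \<le> d / (real (fib n))^2"
    and d0: "0 \<le> d" and d1: "d < 1"
  shows "real (fib (n-2)) / real (fib n) - d \<le> real (fib n) * (dist_int (\<alpha> * of_int x) * dist_int (\<beta> * of_int x))"
proof -
  define N where "N = real (fib n)"
  define NN where "NN = int (fib n)"
  define K where "K = int (fib (n-1))"
  have NNN: "N = real_of_int NN" unfolding N_def NN_def by simp
  have "fib 3 \<le> fib n" using n3 by (rule fib_mono)
  then have N2: "N \<ge> 2" unfolding N_def by (simp add: numeral_3_eq_3)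
  then have Npos: "N > 0" by simp
  obtain k where k: "dist_int (real_of_int (A*x) / N) = \<bar>real_of_int (A*x) / N - of_int k\<bar>"
    using dist_int_ex by blast
  define U where "U = A*x - k*NN"
  have dU: "dist_int (real_of_int (A*x) / N) = real_of_int \<bar>U\<bar> / N"
  proof -
    have "real_of_int U = real_of_int (A*x) - of_int k * N" unfolding U_def NNN by simp
    then have "real_of_int (A*x) / N - of_int k = real_of_int U / N"
      using Npos by (simp add: diff_divide_distrib)
    then have "dist_int (real_of_int (A*x) / N) = \<bar>real_of_int U / N\<bar>" using k by metis
    also have "\<dots> = real_of_int \<bar>U\<bar> / N" using Npos by (simp add: abs_divide)
    finally show ?thesis .
  qed
  obtain k' where k': "dist_int (real_of_int (K*A*x) / N) = \<bar>real_of_int (K*A*x) / N - of_int k'\<bar>"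
    using dist_int_ex by blast
  define w where "w = K*A*x - k'*NN"
  have dW: "dist_int (real_of_int (K*A*x) / N) = real_of_int \<bar>w\<bar> / N"
  proof -
    have "real_of_int w = real_of_int (K*A*x) - of_int k' * N" unfolding w_def NNN by simp
    then have "real_of_int (K*A*x) / N - of_int k' = real_of_int w / N"
      using Npos by (simp add: diff_divide_distrib)
    then have "dist_int (real_of_int (K*A*x) / N) = \<bar>real_of_int w / N\<bar>" using k' by metis
    also have "\<dots> = real_of_int \<bar>w\<bar> / N" using Npos by (simp add: abs_divide)
    finally show ?thesis .
  qed
  have rel: "int (fib (n-1)) * U - w = int (fib n) * (k' - K*k)"
    unfolding U_def w_def K_def NN_def by (simp add: algebra_simps)
  have U0: "U \<noteq> 0"
  proof
    assume "U = 0"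
    then have "NN dvd x * A" unfolding U_def by (simp add: algebra_simps)
    moreover have "coprime NN A" using cop unfolding NN_def
      by (simp add: coprime_iff_gcd_eq_1 gcd.commute)
    ultimately have "NN dvd x" using coprime_dvd_mult_left_iff by blast
    then have "NN \<le> x" using x1 by (simp add: zdvd_imp_le)
    then show False using x2 NN_def by simp
  qed
  have Uh: "real_of_int \<bar>U\<bar> \<le> N / 2"
    proof -
    have "real_of_int \<bar>U\<bar> / N \<le> 1/2" using dU dist_int_bounds(2)[of "real_of_int (A*x) / N"] by metis
    then show ?thesis using Npos by (simp add: divide_le_eq)
  qed
  have wh: "real_of_int \<bar>w\<bar> \<le> N / 2"
    proof -
    have "real_of_int \<bar>w\<bar> / N \<le> 1/2" using dW dist_int_bounds(2)[of "real_of_int (K*A*x) / N"] by metis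
    then show ?thesis using Npos by (simp add: divide_le_eq)
  qed
  have Ub: "\<bar>U\<bar> < int (fib n)"
  proof -
    have "real_of_int \<bar>U\<bar> < N" using Uh Npos by linarith
    then show ?thesis unfolding N_def by linarith
  qed
  have lat: "int (fib (n-2)) \<le> \<bar>U\<bar> * \<bar>w\<bar>"
    by (rule lattice[OF _ U0 Ub rel]) (use n3 in simp)
  have "fib 1 \<le> fib (n-2)" using n3 by (intro fib_mono) simp
  then have "int (fib (n-2)) \<ge> 1" by simp
  then have w0: "w \<noteq> 0" using lat by auto
  define a where "a = real_of_int \<bar>U\<bar>"
  define b where "b = real_of_int \<bar>w\<bar>"
  have a1: "a \<ge> 1" unfolding a_def using U0 by simp
  have b1: "b \<ge> 1" unfolding b_def using w0 by simp
  have ab: "real (fib (n-2)) \<le> a * b" unfolding a_def b_def using lat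
    by (metis of_int_le_iff of_int_mult of_int_of_nat_eq)
  have xN: "real_of_int x \<le> N" using x2 unfolding N_def by simp
  have x0: "real_of_int x \<ge> 0" using x1 by simp
  have ex: "e * real_of_int x \<le> d / N"
  proof -
    have "e * real_of_int x \<le> (d / N^2) * N" using e0 e1 x0 xN unfolding N_def
      by (intro mult_mono) auto
    also have "\<dots> = d / N" using Npos by (simp add: power2_eq_square)
    finally show ?thesis .
  qed
  have ex': "e' * real_of_int x \<le> d / N"
  proof -
    have "e' * real_of_int x \<le> (d / N^2) * N" using e0' e1' x0 xN unfolding N_def
      by (intro mult_mono) auto
    also have "\<dots> = d / N" using Npos by (simp add: power2_eq_square)
    finally show ?thesis .
  qed
  have D1: "dist_int (\<alpha> * of_int x) \<ge> (a - d) / N"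
  proof -
    have "\<alpha> * of_int x = real_of_int (A*x) / N + e * of_int x"
      unfolding ha N_def by (simp add: field_simps)
    then have "\<alpha> * of_int x - real_of_int (A*x) / N = e * of_int x" by simp
    then have "dist_int (\<alpha> * of_int x) \<ge> dist_int (real_of_int (A*x) / N) - \<bar>e * of_int x\<bar>"
      using dist_int_lip[where s="\<alpha> * of_int x" and t="real_of_int (A*x) / N"] by metis
    moreover have "\<bar>e * of_int x\<bar> = e * of_int x" using e0 x0 by simp
    ultimately have "dist_int (\<alpha> * of_int x) \<ge> a / N - d / N" using dU ex unfolding a_def by linarith
    then show ?thesis by (simp add: diff_divide_distrib)
  qed
  have D2: "dist_int (\<beta> * of_int x) \<ge> (b - d) / N"
  proof -
    define fl where "fl = \<lfloor>real (fib (n - 1)) * real_of_int A / real (fib n)\<rfloor>"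
    have "\<beta> * of_int x = (real_of_int (K*A*x) / N + of_int (- fl * x)) + e' * of_int x"
      unfolding hb N_def K_def fl_def frac_def by (simp add: field_simps)
    then have "\<beta> * of_int x - (real_of_int (K*A*x) / N + of_int (- fl * x)) = e' * of_int x" by simp
    then have "dist_int (\<beta> * of_int x) \<ge> dist_int (real_of_int (K*A*x) / N + of_int (- fl * x)) - \<bar>e' * of_int x\<bar>"
      using dist_int_lip[where s="\<beta> * of_int x" and t="real_of_int (K*A*x) / N + of_int (- fl * x)"] by metis
    moreover have "\<bar>e' * of_int x\<bar> = e' * of_int x" using e0' x0 by simp
    moreover have "dist_int (real_of_int (K*A*x) / N + of_int (- fl * x)) = b / N"
      using dW b_def by (simp only: dist_int_shift)
    ultimately have "dist_int (\<beta> * of_int x) \<ge> b / N - d / N" using ex' by linarith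
    then show ?thesis by (simp add: diff_divide_distrib)
  qed
  have "(a - d) / N * ((b - d) / N) \<le> dist_int (\<alpha> * of_int x) * dist_int (\<beta> * of_int x)"
    using D1 D2 a1 b1 d1 Npos dist_int_bounds(1) by (intro mult_mono) auto
  then have "N * ((a - d) / N * ((b - d) / N)) \<le> N * (dist_int (\<alpha> * of_int x) * dist_int (\<beta> * of_int x))"
    using Npos by (intro mult_left_mono) auto
  moreover have "N * ((a - d) / N * ((b - d) / N)) = (a*b - d*(a+b) + d*d) / N"
    using Npos by (simp add: field_simps power2_eq_square)
  moreover have "a + b \<le> N" using Uh wh a_def b_def by simp
  moreover have "(real (fib (n-2)) - d * N) / N \<le> (a*b - d*(a+b) + d*d) / N"
  proof -
    have "d * (a+b) \<le> d * N" using d0 \<open>a + b \<le> N\<close> by (simp add: mult_left_mono)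
    then have "real (fib (n-2)) - d * N \<le> a*b - d*(a+b) + d*d" using ab d0 by (smt (verit) zero_le_mult_iff)
    then show ?thesis using Npos by (simp add: divide_right_mono)
  qed
  moreover have "(real (fib (n-2)) - d * N) / N = real (fib (n-2)) / N - d"
    using Npos by (simp add: field_simps)
  ultimately show ?thesis unfolding N_def by linarith
qed



lemma fib_strict: "2 \<le> a \<Longrightarrow> a < b \<Longrightarrow> fib a < fib b"
proof (induction b)
  case 0 then show ?case by simp
next
  case (Suc b)
  have "fib b < fib (Suc b)"
  proof -
    obtain c where c: "b = Suc c" "c \<ge> 1" using Suc.prems by (cases b) auto
    have "fib (Suc b) = fib b + fib c" using c fib_plus_2[of c] by simp
    moreover have "fib c > 0" using c by (simp add: fib_neq_0_nat)
    ultimately show ?thesis by simp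
  qed
  then show ?case using Suc.IH Suc.prems by (metis less_SucE order.strict_trans)
qed

lemma fib_ratio: "(\<lambda>m. real (fib (m-2)) / real (fib m)) \<longlonglongrightarrow> 2 / (3 + sqrt 5)"
proof -
  define \<phi> :: real where "\<phi> = (1 + sqrt 5) / 2"
  define g where "g m = real (fib m) / (\<phi> ^ m / sqrt 5)" for m
  have g1: "g \<longlonglongrightarrow> 1" unfolding g_def \<phi>_def by (rule fib_asymptotics)
  then have g2: "(\<lambda>m. g (m+2)) \<longlonglongrightarrow> 1" by (rule LIMSEQ_ignore_initial_segment)
  have p: "\<phi> > 0" unfolding \<phi>_def by (simp add: add_pos_nonneg)
  have "(\<lambda>m. g m / g (m+2) / \<phi>^2) \<longlonglongrightarrow> 1 / 1 / \<phi>^2"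
    by (intro tendsto_intros g1 g2) (use p in simp_all)
  moreover have "1 / 1 / \<phi>^2 = 2 / (3 + sqrt 5)"
  proof -
    have "\<phi>^2 = (3 + sqrt 5) / 2" unfolding \<phi>_def by (simp add: power2_eq_square field_simps)
    moreover have "3 + sqrt 5 > (0::real)" by (simp add: add_pos_nonneg)
    ultimately show ?thesis using p by (simp add: divide_simps)
  qed
  moreover have "g m / g (m+2) / \<phi>^2 = real (fib (m+2-2)) / real (fib (m+2))" for m
  proof -
    define F0 where "F0 = real (fib m)"
    define F2 where "F2 = real (fib (m+2))"
    have f: "F2 > 0" unfolding F2_def using fib_neq_0_nat[of "m+2"] by (simp only: of_nat_0_less_iff)
    have s5: "sqrt 5 > (0::real)" by simp
    have pm: "\<phi>^m > 0" using p by simp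
    have "g m = F0 * sqrt 5 / \<phi>^m" unfolding g_def F0_def by simp
    moreover have "g (m+2) = F2 * sqrt 5 / (\<phi>^m * \<phi>^2)" unfolding g_def F2_def by (simp add: power_add power2_eq_square)
    ultimately have "g m / g (m+2) / \<phi>^2 = (F0 * sqrt 5 / \<phi>^m) / (F2 * sqrt 5 / (\<phi>^m * \<phi>^2)) / \<phi>^2"
      by (simp only:)
    also have "\<dots> = F0 / F2" using f s5 pm p by (simp add: field_simps)
    finally have "g m / g (m+2) / \<phi>^2 = F0 / F2" .
    then show ?thesis unfolding F0_def F2_def by simp
  qed
  ultimately have "(\<lambda>m. real (fib (m+2-2)) / real (fib (m+2))) \<longlonglongrightarrow> 2 / (3 + sqrt 5)"
    by simp
  then show ?thesis by (rule LIMSEQ_offset)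
qed



theorem theorem1:
  fixes \<delta> :: "nat \<Rightarrow> real" and n :: "nat \<Rightarrow> nat" and a :: "nat \<Rightarrow> int"
    and \<alpha> \<beta> :: real
  assumes delta_pos: "\<And>\<nu>. \<delta> \<nu> > 0"
    and delta_lim: "\<delta> \<longlonglongrightarrow> 0"
    and n_mono: "strict_mono n"
    and n_pos: "\<And>\<nu>. n \<nu> > 0"
    and a_bounds: "\<And>\<nu>. 1 \<le> a \<nu> \<and> a \<nu> < int (fib (n \<nu>))"
    and a_coprime: "\<And>\<nu>. gcd (a \<nu>) (int (fib (n \<nu>))) = 1"
    and I_nested: "\<And>\<nu>. I_int \<delta> a n (Suc \<nu>) \<subseteq> I_int \<delta> a n \<nu>"
    and J_nested: "\<And>\<nu>. J_int \<delta> a n (Suc \<nu>) \<subseteq> J_int \<delta> a n \<nu>"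
    and alpha_def: "(\<Inter>\<nu>. I_int \<delta> a n \<nu>) = {\<alpha>}"
    and beta_def: "(\<Inter>\<nu>. J_int \<delta> a n \<nu>) = {\<beta>}"
  shows "limsup (\<lambda>Q::nat. ereal (real Q *
            Min ((\<lambda>x::int. dist_int (\<alpha> * of_int x) * dist_int (\<beta> * of_int x))
                   ` {x. 1 \<le> x \<and> x < int Q})))
         \<ge> ereal (2 / (3 + sqrt 5))"
proof -
  define c :: real where "c = 2 / (3 + sqrt 5)"
  define h where "h x = dist_int (\<alpha> * of_int x) * dist_int (\<beta> * of_int x)" for x :: int
  define f where "f Q = ereal (real Q * Min (h ` {x. 1 \<le> x \<and> x < int Q}))" for Q :: nat
  define m where "m \<nu> = n (\<nu> + 3)" for \<nu>
  define r where "r \<nu> = fib (m \<nu>)" for \<nu>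
  define g where "g \<nu> = real (fib (m \<nu> - 2)) / real (fib (m \<nu>)) - \<delta> (\<nu> + 3)" for \<nu>
  have m_mono: "strict_mono m" using n_mono unfolding m_def strict_mono_def by simp
  have m3: "m \<nu> \<ge> 3" for \<nu>
    using seq_suble[OF n_mono, of "\<nu>+3"] unfolding m_def by simp
  have r_mono: "strict_mono r"
    unfolding strict_mono_def r_def
  proof (intro allI impI)
    fix x y :: nat assume "x < y"
    then have "m x < m y" using m_mono by (simp add: strict_mono_less)
    then show "fib (m x) < fib (m y)" using m3[of x] by (intro fib_strict) auto
  qed
  have m_lim: "filterlim m at_top sequentially" by (rule filterlim_subseq[OF m_mono])
  have lim1: "(\<lambda>\<nu>. real (fib (m \<nu> - 2)) / real (fib (m \<nu>))) \<longlonglongrightarrow> c"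
    unfolding c_def using fib_ratio m_lim by (rule filterlim_compose)
  have lim2: "(\<lambda>\<nu>. \<delta> (\<nu> + 3)) \<longlonglongrightarrow> 0" using delta_lim by (rule LIMSEQ_ignore_initial_segment)
  have glim: "g \<longlonglongrightarrow> c - 0" unfolding g_def by (intro tendsto_diff lim1 lim2)
  have "limsup (\<lambda>\<nu>. ereal (g \<nu>)) = ereal c"
    by (rule lim_imp_Limsup) (use glim in \<open>auto intro: tendsto_ereal\<close>)
  have ev: "eventually (\<lambda>\<nu>. \<delta> (\<nu> + 3) < 1) sequentially"
    using lim2 by (rule order_tendstoD) simp
  have bound: "ereal (g \<nu>) \<le> (f \<circ> r) \<nu>" if d1: "\<delta> (\<nu> + 3) < 1" for \<nu>
  proof -
    define N where "N = fib (m \<nu>)"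
    define S where "S = {x::int. 1 \<le> x \<and> x < int N}"
    have N2: "N \<ge> 2" unfolding N_def using fib_mono[of 3 "m \<nu>"] m3[of \<nu>] by (simp add: numeral_3_eq_3)
    have Sfin: "finite S" unfolding S_def
      by (rule finite_subset[of _ "{1..<int N}"]) auto
    have Sne: "S \<noteq> {}" unfolding S_def using N2 by (auto intro!: exI[of _ 1])
    have ain: "\<alpha> \<in> I_int \<delta> a n (\<nu>+3)" and bin: "\<beta> \<in> J_int \<delta> a n (\<nu>+3)"
      using alpha_def beta_def by blast+
    define e where "e = \<alpha> - real_of_int (a (\<nu>+3)) / real N"
    define e' where "e' = \<beta> - frac (real (fib (m \<nu> - 1)) * real_of_int (a (\<nu>+3)) / real N)"
    have e: "0 \<le> e" "e \<le> \<delta> (\<nu>+3) / (real N)^2"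
      using ain unfolding e_def I_int_def alpha_seq_def N_def m_def by auto
    have e': "0 \<le> e'" "e' \<le> \<delta> (\<nu>+3) / (real N)^2"
      using bin unfolding e'_def J_int_def beta_seq_def N_def m_def by auto
    have key_x: "g \<nu> \<le> real N * h x" if "x \<in> S" for x
      unfolding g_def h_def N_def
    proof (rule key[where A = "a (\<nu>+3)" and e = e and e' = e'])
      show "3 \<le> m \<nu>" by (rule m3)
      show "gcd (a (\<nu>+3)) (int (fib (m \<nu>))) = 1" using a_coprime unfolding m_def by simp
      show "1 \<le> x" "x < int (fib (m \<nu>))" using that unfolding S_def N_def by auto
      show "\<alpha> = real_of_int (a (\<nu>+3)) / real (fib (m \<nu>)) + e" unfolding e_def N_def by simp
      show "\<beta> = frac (real (fib (m \<nu> - 1)) * real_of_int (a (\<nu>+3)) / real (fib (m \<nu>))) + e'"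
        unfolding e'_def N_def by simp
      show "0 \<le> e" "0 \<le> e'" using e e' by auto
      show "e \<le> \<delta> (\<nu>+3) / (real (fib (m \<nu>)))^2" "e' \<le> \<delta> (\<nu>+3) / (real (fib (m \<nu>)))^2"
        using e e' unfolding N_def by auto
      show "0 \<le> \<delta> (\<nu>+3)" using delta_pos[of "\<nu>+3"] by simp
      show "\<delta> (\<nu>+3) < 1" by (rule d1)
    qed
    have "Min (h ` S) \<in> h ` S" using Sfin Sne by (intro Min_in) auto
    then obtain x where x: "x \<in> S" "Min (h ` S) = h x" by auto
    have "g \<nu> \<le> real N * Min (h ` S)" using key_x[OF x(1)] x(2) by simp
    then show ?thesis unfolding f_def r_def N_def S_def by (simp add: N_def)
  qed
  have "ereal c = limsup (\<lambda>\<nu>. ereal (g \<nu>))" using \<open>limsup (\<lambda>\<nu>. ereal (g \<nu>)) = ereal c\<close> by simp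
  also have "\<dots> \<le> limsup (f \<circ> r)"
    by (rule Limsup_mono) (use ev in \<open>eventually_elim\<close>, use bound in auto)
  also have "\<dots> \<le> limsup f" by (rule limsup_subseq_mono[OF r_mono])
  finally show ?thesis unfolding c_def f_def h_def by simp
qed


end
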